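(* Consider $n\ge2$ agents in $\mathbb{R}^d$ ($d\ge2$) with undirected graph $\mathcal{G}=(\mathcal{V},\mathcal{E})$, constant desired bearings $\{g_{ij}^*\}_{(i,j)\in\mathcal{E}}$, leaders $\mathcal{V}_\ell=\{1,\dots,n_\ell\}$ with positions $p_i(t)$, $\dot p_i=v_i^*$, and followers $\mathcal{V}_f=\{n_\ell+1,\dots,n\}$, and suppose the standing assumption below holds. Let $p^*(t)$ be the target formation, so that $p_\ell^*(t)=p_\ell(t)$ and $p_f^*(t)=-\mathcal{L}_{ff}^{-1}\mathcal{L}_{f\ell}p_\ell(t)$. If the velocity of each leader is constant and equal to a common vector, $v_i^*=\mathbf{v}_c\in\mathbb{R}^d$ for all $i\in\mathcal{V}_\ell$, then $\dot c(p^*(t))\equiv\mathbf{v}_c$ and $\dot s(p^*(t))\equiv 0$.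
   Context: $P_x=I_d-\frac{xx^T}{\|x\|^2}$. The bearing Laplacian $\mathcal{L}\in\mathbb{R}^{dn\times dn}$ has $(i,j)$-th $d\times d$ block $0$ if $i\ne j,(i,j)\notin\mathcal{E}$; $-P_{g_{ij}^*}$ if $i\ne j,(i,j)\in\mathcal{E}$; $\sum_{k\in\mathcal{N}_i}P_{g_{ik}^*}$ if $i=j$; partitioned into leader/follower blocks $\mathcal{L}_{\ell\ell},\mathcal{L}_{\ell f},\mathcal{L}_{f\ell},\mathcal{L}_{ff}$. Target formation: $p^*(t)\in\mathbb{R}^{dn}$ with $p_i^*(t)=p_i(t)$ for leaders and $(p_j^*-p_i^* )/\|p_j^*-p_i^*\|=g_{ij}^*$ for all edges. Infinitesimal bearing rigidity of $q$: with $g_k=(q_j-q_i)/\|q_j-q_i\|$ for the $k$-th oriented edge, $F_B(q)=[g_1^T,\dots,g_m^T]^T$, $R_B=\partial F_B/\partial q$, require $\mathrm{Null}(R_B(q))=\mathrm{span}\{\mathbf{1}_n\otimes I_d,q\}$. Standing assumption: the target formation exists for all $t$, is infinitesimally bearing rigid, and $n_\ell\ge2$; then $\mathcal{L}_{ff}$ is positive definite. Centroid and scale of $q\in\mathbb{R}^{dn}$: $c(q)=\frac1n\sum_{i=1}^n q_i$, $s(q)=\sqrt{\frac1n\sum_{i=1}^n\|q_i-c(q)\|^2}=\frac{1}{\sqrt n}\|q-\mathbf{1}_n\otimes c(q)\|$. *)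

theory Defs
  imports "HOL-Analysis.Analysis"
begin

text \<open>Agents are indexed by a finite type 'n (n = CARD('n)), positions live in real^'d.
  A stacked configuration q in R^{dn} is an element of real^'d^'n, q $ i being agent i.\<close>

definition proj_mat :: "real^'d \<Rightarrow> real^'d^'d" where
  "proj_mat x = mat 1 - (1 / (norm x)\<^sup>2) *\<^sub>R (\<chi> a b. x $ a * x $ b)"

text \<open>Bearing function F_B: for each ordered pair (i,j) in E the bearing of q_j relative to q_i;
  non-edges give the zero vector (zero rows do not change the null space of R_B).\<close>
definition bearing_fun :: "('n::finite \<times> 'n) set \<Rightarrow> real^'d^'n \<Rightarrow> real^'d^('n \<times> 'n)" where
  "bearing_fun E q = (\<chi> e. if e \<in> E then (q $ snd e - q $ fst e) /\<^sub>R norm (q $ snd e - q $ fst e) else 0)"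

definition inf_bearing_rigid :: "('n::finite \<times> 'n) set \<Rightarrow> real^'d^'n \<Rightarrow> bool" where
  "inf_bearing_rigid E q \<longleftrightarrow>
     bearing_fun E differentiable (at q) \<and>
     {\<delta>. frechet_derivative (bearing_fun E) (at q) \<delta> = 0} = span (range (\<lambda>v::real^'d. \<chi> i. v) \<union> {q})"

definition bearing_lap :: "('n::finite \<times> 'n) set \<Rightarrow> ('n \<times> 'n \<Rightarrow> real^'d) \<Rightarrow> 'n \<Rightarrow> 'n \<Rightarrow> real^'d^'d" where
  "bearing_lap E gs i j =
     (if i \<noteq> j then (if (i, j) \<in> E then - proj_mat (gs (i, j)) else 0)
      else (\<Sum>k\<in>{k. (i, k) \<in> E}. proj_mat (gs (i, k))))"

definition is_target_formation ::
  "('n::finite \<times> 'n) set \<Rightarrow> ('n \<times> 'n \<Rightarrow> real^'d) \<Rightarrow> 'n set \<Rightarrow> real^'d^'n \<Rightarrow> real^'d^'n \<Rightarrow> bool" where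
  "is_target_formation E gs Vl p q \<longleftrightarrow>
     (\<forall>i\<in>Vl. q $ i = p $ i) \<and>
     (\<forall>(i, j)\<in>E. (q $ j - q $ i) /\<^sub>R norm (q $ j - q $ i) = gs (i, j))"

definition centroid :: "real^'d^'n::finite \<Rightarrow> real^'d" where
  "centroid q = (1 / real CARD('n)) *\<^sub>R (\<Sum>i\<in>UNIV. q $ i)"

definition scale :: "real^'d^'n::finite \<Rightarrow> real" where
  "scale q = sqrt ((1 / real CARD('n)) * (\<Sum>i\<in>UNIV. (norm (q $ i - centroid q))\<^sup>2))"

end

theory Submission
  imports Defs
begin

lemma sum_mat_mult_vec:
  fixes M :: "'j \<Rightarrow> real^'a^'b"
  shows "(\<Sum>j\<in>A. M j *v v) = (\<Sum>j\<in>A. M j) *v v"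
  by (induction A rule: infinite_finite_induct) (auto simp: matrix_vector_mult_add_rdistrib)

lemma split_compl:
  fixes f :: "'a::finite \<Rightarrow> 'b::comm_monoid_add"
  shows "sum f UNIV = sum f (- A) + sum f A"
  using sum.union_disjoint[of "-A" A f] by (simp add: Compl_partition2)

lemma lap_rowsum:
  fixes E :: "('n::finite \<times> 'n) set" and gs :: "'n \<times> 'n \<Rightarrow> real^'d::finite"
  assumes irr: "\<forall>i. (i, i) \<notin> E"
  shows "(\<Sum>j\<in>UNIV. bearing_lap E gs i j) = 0"
proof -
  have U: "UNIV = insert i (UNIV - {i})" by auto
  have "(\<Sum>j\<in>UNIV. bearing_lap E gs i j) = bearing_lap E gs i i + (\<Sum>j\<in>UNIV - {i}. bearing_lap E gs i j)"
    by (subst U, subst sum.insert) auto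
  also have "(\<Sum>j\<in>UNIV - {i}. bearing_lap E gs i j)
      = (\<Sum>j\<in>UNIV - {i}. if (i, j) \<in> E then - proj_mat (gs (i, j)) else 0)"
    by (rule sum.cong) (auto simp: bearing_lap_def)
  also have "\<dots> = (\<Sum>j\<in>{j\<in>UNIV - {i}. (i, j) \<in> E}. - proj_mat (gs (i, j)))"
    by (rule sum.inter_filter[symmetric]) simp
  also have "{j\<in>UNIV - {i}. (i, j) \<in> E} = {k. (i, k) \<in> E}" using irr by auto
  finally show ?thesis by (simp add: bearing_lap_def sum_negf)
qed

theorem proposition1:
  fixes E :: "('n::finite \<times> 'n) set"
    and gs :: "'n \<times> 'n \<Rightarrow> real^'d::finite"
    and Vl :: "'n set"
    and p pstar :: "real \<Rightarrow> real^'d^'n"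
    and vc :: "real^'d"
  assumes n2: "CARD('n) \<ge> 2"
    and d2: "CARD('d) \<ge> 2"
    and E_sym: "\<forall>i j. (i, j) \<in> E \<longrightarrow> (j, i) \<in> E"
    and E_irrefl: "\<forall>i. (i, i) \<notin> E"
    and nl2: "card Vl \<ge> 2"
    and target: "\<forall>t. is_target_formation E gs Vl (p t) (pstar t)"
    and rigid: "\<forall>t. inf_bearing_rigid E (pstar t)"
    and Lff_pd: "\<forall>x::real^'d^'n. (\<forall>i\<in>Vl. x $ i = 0) \<and> x \<noteq> 0 \<longrightarrow>
                   (\<Sum>i\<in>- Vl. \<Sum>j\<in>- Vl. x $ i \<bullet> (bearing_lap E gs i j *v x $ j)) > 0"
    and followers: "\<forall>t. \<forall>i\<in>- Vl.
                   (\<Sum>j\<in>- Vl. bearing_lap E gs i j *v pstar t $ j)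
                 + (\<Sum>j\<in>Vl. bearing_lap E gs i j *v p t $ j) = 0"
    and leader_vel: "\<forall>i\<in>Vl. \<forall>t. ((\<lambda>t. p t $ i) has_vector_derivative vc) (at t)"
  shows "\<forall>t. ((\<lambda>t. centroid (pstar t)) has_vector_derivative vc) (at t)
           \<and> ((\<lambda>t. scale (pstar t)) has_real_derivative 0) (at t)"
proof -
  let ?L = "bearing_lap E gs"
  define c :: "real^'d^'n" where "c = (\<chi> i. vc)"
  define q where "q t = pstar 0 + t *\<^sub>R c" for t
  have lead: "p t $ i = p 0 $ i + t *\<^sub>R vc" if i: "i \<in> Vl" for t i
  proof -
    have d: "\<And>x. ((\<lambda>t. p t $ i - t *\<^sub>R vc) has_vector_derivative 0) (at x)"
    proof -
      fix x
      have "((\<lambda>t. p t $ i - t *\<^sub>R vc) has_vector_derivative vc - 1 *\<^sub>R vc) (at x)"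
        using leader_vel i has_vector_derivative_scaleR[OF DERIV_ident has_vector_derivative_const, of vc x]
        by (intro derivative_intros) auto
      then show "((\<lambda>t. p t $ i - t *\<^sub>R vc) has_vector_derivative 0) (at x)" by simp
    qed
    obtain k where "\<And>x. x \<in> UNIV \<Longrightarrow> p x $ i - x *\<^sub>R vc = k"
      using has_vector_derivative_zero_constant[of UNIV "\<lambda>t. p t $ i - t *\<^sub>R vc"] d by auto
    from this[of t] this[of 0] show ?thesis by (simp add: algebra_simps)
  qed
  have pl: "pstar t $ i = p t $ i" if "i \<in> Vl" for t i
    using target that unfolding is_target_formation_def by auto
  have full: "(\<Sum>j\<in>UNIV. ?L i j *v pstar t $ j) = 0" if "i \<in> - Vl" for t i
  proof -
    have "(\<Sum>j\<in>UNIV. ?L i j *v pstar t $ j) = (\<Sum>j\<in>- Vl. ?L i j *v pstar t $ j) + (\<Sum>j\<in>Vl. ?L i j *v pstar t $ j)"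
      by (rule split_compl)
    also have "(\<Sum>j\<in>Vl. ?L i j *v pstar t $ j) = (\<Sum>j\<in>Vl. ?L i j *v p t $ j)"
      using pl by simp
    finally show ?thesis using followers that by simp
  qed
  have qeq: "pstar t = q t" for t
  proof (rule ccontr)
    assume ne: "pstar t \<noteq> q t"
    define x where "x = pstar t - q t"
    have x0: "\<forall>i\<in>Vl. x $ i = 0"
    proof
      fix i assume i: "i \<in> Vl"
      have "pstar t $ i = pstar 0 $ i + t *\<^sub>R vc"
        using lead[OF i, of t] pl[OF i, of t] pl[OF i, of 0] by simp
      then show "x $ i = 0" by (simp add: x_def q_def c_def)
    qed
    have xn: "x \<noteq> 0" using ne by (simp add: x_def)
    have fx: "(\<Sum>j\<in>- Vl. ?L i j *v x $ j) = 0" if "i \<in> - Vl" for i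
    proof -
      have "(\<Sum>j\<in>UNIV. ?L i j *v q t $ j) = (\<Sum>j\<in>UNIV. ?L i j *v pstar 0 $ j) + t *\<^sub>R (\<Sum>j\<in>UNIV. ?L i j *v vc)"
        by (simp add: q_def c_def matrix_vector_right_distrib matrix_vector_mult_scaleR sum.distrib scaleR_sum_right)
      also have "(\<Sum>j\<in>UNIV. ?L i j *v vc) = 0"
        by (simp add: sum_mat_mult_vec lap_rowsum[OF E_irrefl])
      finally have "(\<Sum>j\<in>UNIV. ?L i j *v q t $ j) = 0" using full[OF that] by simp
      then have "(\<Sum>j\<in>UNIV. ?L i j *v x $ j) = 0"
        using full[OF that, of t] by (simp add: x_def matrix_vector_mult_diff_distrib sum_subtractf)
      moreover have "(\<Sum>j\<in>UNIV. ?L i j *v x $ j) = (\<Sum>j\<in>- Vl. ?L i j *v x $ j) + (\<Sum>j\<in>Vl. ?L i j *v x $ j)"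
        by (rule split_compl)
      moreover have "(\<Sum>j\<in>Vl. ?L i j *v x $ j) = 0" using x0 by simp
      ultimately show ?thesis by simp
    qed
    have "(\<Sum>i\<in>- Vl. \<Sum>j\<in>- Vl. x $ i \<bullet> (?L i j *v x $ j)) = (\<Sum>i\<in>- Vl. x $ i \<bullet> (\<Sum>j\<in>- Vl. ?L i j *v x $ j))"
      by (simp add: inner_sum_right)
    also have "\<dots> = 0" using fx by simp
    finally show False using Lff_pd x0 xn by force
  qed
  have cq: "centroid (q t) = centroid (pstar 0) + t *\<^sub>R vc" for t
  proof -
    have "(\<Sum>i\<in>UNIV. q t $ i) = (\<Sum>i\<in>UNIV. pstar 0 $ i) + (real CARD('n) * t) *\<^sub>R vc"
      by (simp add: q_def c_def sum.distrib sum_constant_scaleR del: sum_constant)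
    moreover have "real CARD('n) \<noteq> 0" by simp
    ultimately show ?thesis by (simp add: centroid_def scaleR_add_right)
  qed
  have sq: "scale (q t) = scale (pstar 0)" for t
    unfolding scale_def using cq[of t] by (simp add: q_def c_def)
  have F1: "(\<lambda>t. centroid (pstar t)) = (\<lambda>t. centroid (pstar 0) + t *\<^sub>R vc)"
    by (rule ext) (metis qeq cq)
  have F2: "(\<lambda>t. scale (pstar t)) = (\<lambda>t. scale (pstar 0))"
    by (rule ext) (metis qeq sq)
  show ?thesis
  proof
    fix t
    have "((\<lambda>t. centroid (pstar 0) + t *\<^sub>R vc) has_vector_derivative 0 + 1 *\<^sub>R vc) (at t)"
      using has_vector_derivative_scaleR[OF DERIV_ident has_vector_derivative_const, of vc t]
      by (intro derivative_intros) auto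
    then show "((\<lambda>t. centroid (pstar t)) has_vector_derivative vc) (at t)
           \<and> ((\<lambda>t. scale (pstar t)) has_real_derivative 0) (at t)"
      unfolding F1 F2 by simp
  qed
qed

end
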